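(* For every graph $G=(V,E)$, every edge ordering, and every integer $f\ge 1$, the output $H$ of the algorithm $\mathsf{FTGreedyMFDCertificate}(G,f)$ is an $f$-MFD connectivity certificate of $G$.
   Context: For $F\subseteq V\cup E$, $G-F$ is obtained by deleting the vertices of $F\cap V$ (with incident edges) and the edges of $F\cap E$; $F$ damages an edge $e$ if $e$ is not an edge of $G-F$. For $v\in V$ let $\deg_G(v,F)=|\{u\in N_G(v): u\in F\text{ or }\{u,v\}\in F\}|$ and $\deg_G(F)=\max_{v\in V\setminus F}\deg_G(v,F)$. The algorithm $\mathsf{FTGreedyMFDCertificate}(G,f)$, given the edges ordered $e_1,\dots,e_m$ with $e_i=\{u_i,v_i\}$: start with $H=(V,\emptyset)$; for $i=1,\dots,m$, if there exists $F\subseteq V\cup E$ with $\deg_G(F)\le f$ that does not damage $e_i$ such that $u_i$ and $v_i$ are disconnected in $H-F$, add $e_i$ to $H$; return $H$. A subgraph $H\subseteq G$ is an $f$-MFD connectivity certificate of $G$ if for every $F\subseteq V\cup E$ with $\deg_G(F)\le f$, $G-F$ and $H-F$ have the same connected components. *)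

theory Defs
  imports Main
begin

definition graph :: "'a set \<Rightarrow> 'a set set \<Rightarrow> bool" where
  "graph V E \<longleftrightarrow> finite V \<and> (\<forall>e\<in>E. \<exists>u v. u \<noteq> v \<and> u \<in> V \<and> v \<in> V \<and> e = {u, v})"

text \<open>A fault set F \<subseteq> V \<union> E is represented as a pair (FV, FE) with FV \<subseteq> V and FE \<subseteq> E.\<close>
definition fault_set :: "'a set \<Rightarrow> 'a set set \<Rightarrow> 'a set \<times> 'a set set \<Rightarrow> bool" where
  "fault_set V E F \<longleftrightarrow> fst F \<subseteq> V \<and> snd F \<subseteq> E"

text \<open>G - F: delete the vertices of F (with incident edges) and the edges of F.\<close>
definition del_verts :: "'a set \<Rightarrow> 'a set \<times> 'a set set \<Rightarrow> 'a set" where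
  "del_verts V F = V - fst F"

definition del_edges :: "'a set set \<Rightarrow> 'a set \<times> 'a set set \<Rightarrow> 'a set set" where
  "del_edges E F = {e \<in> E. e \<inter> fst F = {} \<and> e \<notin> snd F}"

definition damages :: "'a set set \<Rightarrow> 'a set \<times> 'a set set \<Rightarrow> 'a set \<Rightarrow> bool" where
  "damages E F e \<longleftrightarrow> e \<notin> del_edges E F"

definition nbrs :: "'a set set \<Rightarrow> 'a \<Rightarrow> 'a set" where
  "nbrs E v = {u. {u, v} \<in> E}"

definition vdeg :: "'a set set \<Rightarrow> 'a \<Rightarrow> 'a set \<times> 'a set set \<Rightarrow> nat" where
  "vdeg E v F = card {u \<in> nbrs E v. u \<in> fst F \<or> {u, v} \<in> snd F}"

definition fdeg :: "'a set \<Rightarrow> 'a set set \<Rightarrow> 'a set \<times> 'a set set \<Rightarrow> nat" where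
  "fdeg V E F = Max (insert 0 ((\<lambda>v. vdeg E v F) ` (V - fst F)))"

definition connected_in :: "'a set \<Rightarrow> 'a set set \<Rightarrow> 'a \<Rightarrow> 'a \<Rightarrow> bool" where
  "connected_in V E u v \<longleftrightarrow> u \<in> V \<and> (u, v) \<in> {(x, y). {x, y} \<in> E}\<^sup>*"

definition greedy_step :: "'a set \<Rightarrow> 'a set set \<Rightarrow> nat \<Rightarrow> 'a set set \<Rightarrow> 'a set \<Rightarrow> 'a set set" where
  "greedy_step V E f H e =
     (if \<exists>F u v. e = {u, v} \<and> fault_set V E F \<and> fdeg V E F \<le> f \<and> \<not> damages E F e \<and>
                 \<not> connected_in (del_verts V F) (del_edges H F) u v
      then insert e H else H)"

definition ft_greedy_mfd_certificate :: "'a set \<Rightarrow> 'a set set \<Rightarrow> nat \<Rightarrow> 'a set list \<Rightarrow> 'a set set" where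
  "ft_greedy_mfd_certificate V E f es = foldl (greedy_step V E f) {} es"

definition mfd_certificate :: "'a set \<Rightarrow> 'a set set \<Rightarrow> 'a set set \<Rightarrow> nat \<Rightarrow> bool" where
  "mfd_certificate V E EH f \<longleftrightarrow> EH \<subseteq> E \<and>
     (\<forall>F. fault_set V E F \<and> fdeg V E F \<le> f \<longrightarrow>
        connected_in (del_verts V F) (del_edges E F) = connected_in (del_verts V F) (del_edges EH F))"

end

theory Submission
  imports Defs
begin

definition good :: "'a set \<Rightarrow> 'a set set \<Rightarrow> nat \<Rightarrow> 'a set set \<Rightarrow> 'a set \<Rightarrow> bool" where
  "good V E f H e \<longleftrightarrow> (\<forall>F u v. e = {u, v} \<and> fault_set V E F \<and> fdeg V E F \<le> f \<and> \<not> damages E F e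
      \<longrightarrow> connected_in (del_verts V F) (del_edges H F) u v)"

lemma good_mono:
  assumes "H \<subseteq> H'" "good V E f H e" shows "good V E f H' e"
proof -
  have rel: "{(x, y). {x, y} \<in> del_edges H F} \<subseteq> {(x, y). {x, y} \<in> del_edges H' F}" for F
    using assms(1) by (auto simp: del_edges_def)
  show ?thesis using assms(2) rtrancl_mono[OF rel]
    unfolding good_def connected_in_def by blast
qed

lemma step_mono: "H \<subseteq> greedy_step V E f H e"
  by (simp add: greedy_step_def subset_insertI)

lemma fold_mono: "H \<subseteq> foldl (greedy_step V E f) H es"
proof (induction es arbitrary: H)
  case Nil then show ?case by simp
next
  case (Cons a es)
  then show ?case using step_mono[of H V E f a] by force
qed

lemma step_good:
  assumes "graph V E"
  shows "good V E f (greedy_step V E f H e) e"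
proof (cases "\<exists>F u v. e = {u, v} \<and> fault_set V E F \<and> fdeg V E F \<le> f \<and> \<not> damages E F e \<and>
                 \<not> connected_in (del_verts V F) (del_edges H F) u v")
  case True
  have eq: "greedy_step V E f H e = insert e H" unfolding greedy_step_def by (rule if_P[OF True])
  show ?thesis unfolding good_def eq
  proof (intro allI impI)
    fix F u v
    assume a: "e = {u, v} \<and> fault_set V E F \<and> fdeg V E F \<le> f \<and> \<not> damages E F e"
    then have d: "e \<in> del_edges E F" unfolding damages_def by blast
    then have "e \<in> E" "e \<inter> fst F = {}" "e \<notin> snd F" by (auto simp: del_edges_def)
    have "e \<subseteq> V" using assms \<open>e \<in> E\<close> unfolding graph_def by fastforce
    then have "u \<in> V" using a by simp
    moreover have "u \<notin> fst F" using \<open>e \<inter> fst F = {}\<close> a by blast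
    moreover have "{u, v} \<in> del_edges (insert e H) F"
      using \<open>e \<inter> fst F = {}\<close> \<open>e \<notin> snd F\<close> a by (auto simp: del_edges_def)
    ultimately show "connected_in (del_verts V F) (del_edges (insert e H) F) u v"
      by (auto simp: connected_in_def del_verts_def)
  qed
next
  case False
  have eq: "greedy_step V E f H e = H" unfolding greedy_step_def by (rule if_not_P[OF False])
  show ?thesis unfolding good_def eq using False by blast
qed

lemma fold_good:
  assumes "graph V E"
  shows "\<forall>e\<in>set es. good V E f (foldl (greedy_step V E f) H es) e"
proof (induction es arbitrary: H)
  case Nil then show ?case by simp
next
  case (Cons a es)
  have "good V E f (foldl (greedy_step V E f) (greedy_step V E f H a) es) a"
    using good_mono[OF fold_mono step_good[OF assms]] by blast
  then show ?case using Cons[of "greedy_step V E f H a"] by simp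
qed

lemma fold_sub:
  "H \<subseteq> E \<Longrightarrow> set es \<subseteq> E \<Longrightarrow> foldl (greedy_step V E f) H es \<subseteq> E"
proof (induction es arbitrary: H)
  case Nil then show ?case by simp
next
  case (Cons a es)
  have "greedy_step V E f H a \<subseteq> E" using Cons.prems by (auto simp: greedy_step_def)
  then show ?case using Cons by simp
qed

theorem mainTheorem5:
  fixes V :: "'a set" and E :: "'a set set" and es :: "'a set list" and f :: nat
  assumes "graph V E"
    and "distinct es" and "set es = E"
    and "f \<ge> 1"
  shows "mfd_certificate V E (ft_greedy_mfd_certificate V E f es) f"
proof -
  let ?H = "ft_greedy_mfd_certificate V E f es"
  have sub: "?H \<subseteq> E" unfolding ft_greedy_mfd_certificate_def
    using fold_sub[of "{}" E es V f] assms(3) by simp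
  have gd: "\<forall>e\<in>E. good V E f ?H e" unfolding ft_greedy_mfd_certificate_def
    using fold_good[OF assms(1), of es f "{}"] assms(3) by simp
  have "connected_in (del_verts V F) (del_edges E F) = connected_in (del_verts V F) (del_edges ?H F)"
    if F: "fault_set V E F" "fdeg V E F \<le> f" for F
  proof (intro ext)
    fix u v
    let ?RE = "{(x, y). {x, y} \<in> del_edges E F}"
    let ?RH = "{(x, y). {x, y} \<in> del_edges ?H F}"
    have r1: "?RH \<subseteq> ?RE" using sub by (auto simp: del_edges_def)
    have r2: "(u, v) \<in> ?RH\<^sup>*" if "(u, v) \<in> ?RE\<^sup>*" for v
      using that
    proof (induction rule: rtrancl_induct)
      case base then show ?case by simp
    next
      case (step x y)
      have "{x, y} \<in> E" using step(2) by (simp add: del_edges_def)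
      then have "good V E f ?H {x, y}" using gd by blast
      moreover have "\<not> damages E F {x, y}" using step(2) by (simp add: damages_def)
      ultimately have "connected_in (del_verts V F) (del_edges ?H F) x y"
        using F unfolding good_def by blast
      then have "(x, y) \<in> ?RH\<^sup>*" by (simp add: connected_in_def)
      then show ?case using step(3) by simp
    qed
    show "connected_in (del_verts V F) (del_edges E F) u v = connected_in (del_verts V F) (del_edges ?H F) u v"
      unfolding connected_in_def using r2 rtrancl_mono[OF r1] by blast
  qed
  then show ?thesis unfolding mfd_certificate_def using sub by blast
qed

end
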